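(* In the univariate contact-tracing model (described in the context), for every $T\in\mathbb{N}$, every probability distribution $D$ on $\{0,1,2,\dots\}$, every $p_T\in(0,1]$, every $\alpha\ge 0$ and every $\beta>0$, there is an optimal policy that is the index policy defined by an interleaved priority ordering of $\{0,1,\dots,T\}$.
   Context: Univariate model. Fix $T\in\mathbb{N}$, a probability distribution $D$ on $\{0,1,2,\dots\}$, constants $p_T\in(0,1]$, $\alpha\ge 0$, and a discount parameter $\beta>0$. Every node has a recency $h\in\{0,1,\dots,T\}$. Each node (index case or child of an infected node) of recency $h$ is infected independently with probability $p(h)=p_T e^{-\alpha(T-h)}$. If a node of recency $h$ is infected, then for each $j\in\{0,\dots,h-1\}$ it has $Z_j\sim D$ children of recency $j$, all counts independent across $j$ and across nodes and independent of infection statuses. Contact tracing: at step $t=0$ the frontier is a given finite multiset of index cases with known recencies. At each step $t=0,1,2,\dots$ while the frontier is nonempty, the tracer selects one frontier node and queries it, removing it from the frontier. The query reveals its infection status; if it is infected and has recency $h$, benefit $e^{-\beta(h+t)}$ is collected and its children (with their recencies) are added to the frontier; otherwise benefit $0$ is collected and nothing is added. Nodes of the same recency are indistinguishable before being queried, so a policy is a (possibly history-dependent) rule choosing at each step which recency present in the frontier to query. A policy is optimal if for every initial frontier it maximizes the expected total collected benefit over all policies. A priority ordering is a permutation $\sigma=(\sigma_0,\dots,\sigma_T)$ of $\{0,\dots,T\}$; the index policy defined by $\sigma$ always queries a frontier node whose recency appears earliest in $\sigma$. The ordering $\sigma$ is interleaved if for every $0\le j\le T$, $\sigma_j$ is either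 the maximum or the minimum of $\{\sigma_j,\sigma_{j+1},\dots,\sigma_T\}$. *)

theory Defs
  imports "HOL-Probability.Probability"
begin

text \<open>Recencies are natural numbers 0..T. A frontier is a finite multiset of recencies.
  The observation of a query of a node of recency h is None (not infected) or
  Some M, where M is the multiset of recencies of its children.\<close>

type_synonym obs = "nat multiset option"
type_synonym history = "(nat \<times> obs) list"

text \<open>A (deterministic, history-dependent) policy receives the initial frontier,
  the history of queries (queried recency and observation) and the current frontier
  and returns a recency to query.  If the returned recency is not present in the
  current frontier, the smallest recency present is queried instead (so every
  function is an admissible policy and every admissible policy arises this way).\<close>
type_synonym policy = "nat multiset \<Rightarrow> history \<Rightarrow> nat multiset \<Rightarrow> nat"

definition infect_prob :: "nat \<Rightarrow> real \<Rightarrow> real \<Rightarrow> nat \<Rightarrow> real" where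
  "infect_prob T pT \<alpha> h = pT * exp (- \<alpha> * (real T - real h))"

primrec children_pmf :: "nat pmf \<Rightarrow> nat \<Rightarrow> nat multiset pmf" where
  "children_pmf D 0 = return_pmf {#}"
| "children_pmf D (Suc h) =
     bind_pmf (children_pmf D h) (\<lambda>M. map_pmf (\<lambda>z. M + replicate_mset z h) D)"

definition outcome_pmf :: "nat \<Rightarrow> nat pmf \<Rightarrow> real \<Rightarrow> real \<Rightarrow> nat \<Rightarrow> obs pmf" where
  "outcome_pmf T D pT \<alpha> h =
     bind_pmf (bernoulli_pmf (infect_prob T pT \<alpha> h))
       (\<lambda>b. if b then map_pmf Some (children_pmf D h) else return_pmf None)"

definition benefit :: "real \<Rightarrow> nat \<Rightarrow> nat \<Rightarrow> obs \<Rightarrow> ennreal" where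
  "benefit \<beta> h t ob = (case ob of None \<Rightarrow> 0 | Some _ \<Rightarrow> ennreal (exp (- \<beta> * (real h + real t))))"

definition added :: "obs \<Rightarrow> nat multiset" where
  "added ob = (case ob of None \<Rightarrow> {#} | Some M \<Rightarrow> M)"

definition choice :: "policy \<Rightarrow> nat multiset \<Rightarrow> history \<Rightarrow> nat multiset \<Rightarrow> nat" where
  "choice \<pi> F0 hist Fc = (let r = \<pi> F0 hist Fc in if r \<in># Fc then r else Min (set_mset Fc))"

text \<open>Expected benefit collected during the first n steps, starting from a state
  with history hist (the current step is t = length hist) and current frontier Fc.\<close>
primrec val_steps :: "nat \<Rightarrow> nat pmf \<Rightarrow> real \<Rightarrow> real \<Rightarrow> real \<Rightarrow> policy \<Rightarrow> nat
    \<Rightarrow> nat multiset \<Rightarrow> history \<Rightarrow> nat multiset \<Rightarrow> ennreal" where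
  "val_steps T D pT \<alpha> \<beta> \<pi> 0 F0 hist Fc = 0"
| "val_steps T D pT \<alpha> \<beta> \<pi> (Suc n) F0 hist Fc =
     (if Fc = {#} then 0 else
       (let h = choice \<pi> F0 hist Fc in
        \<integral>\<^sup>+ ob. benefit \<beta> h (length hist) ob
              + val_steps T D pT \<alpha> \<beta> \<pi> n F0 (hist @ [(h, ob)]) (Fc - {#h#} + added ob)
          \<partial>measure_pmf (outcome_pmf T D pT \<alpha> h)))"

definition total_value :: "nat \<Rightarrow> nat pmf \<Rightarrow> real \<Rightarrow> real \<Rightarrow> real \<Rightarrow> policy \<Rightarrow> nat multiset \<Rightarrow> ennreal" where
  "total_value T D pT \<alpha> \<beta> \<pi> F0 = (SUP n. val_steps T D pT \<alpha> \<beta> \<pi> n F0 [] F0)"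

definition optimal_policy :: "nat \<Rightarrow> nat pmf \<Rightarrow> real \<Rightarrow> real \<Rightarrow> real \<Rightarrow> policy \<Rightarrow> bool" where
  "optimal_policy T D pT \<alpha> \<beta> \<pi> \<longleftrightarrow>
     (\<forall>F0. set_mset F0 \<subseteq> {..T} \<longrightarrow>
        (\<forall>\<pi>'. total_value T D pT \<alpha> \<beta> \<pi>' F0 \<le> total_value T D pT \<alpha> \<beta> \<pi> F0))"

definition priority_ordering :: "nat \<Rightarrow> nat list \<Rightarrow> bool" where
  "priority_ordering T \<sigma> \<longleftrightarrow> distinct \<sigma> \<and> set \<sigma> = {0..T}"

definition interleaved :: "nat \<Rightarrow> nat list \<Rightarrow> bool" where
  "interleaved T \<sigma> \<longleftrightarrow> (\<forall>j\<le>T. \<sigma> ! j = Max (set (drop j \<sigma>)) \<or> \<sigma> ! j = Min (set (drop j \<sigma>)))"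

definition index_policy :: "nat list \<Rightarrow> policy" where
  "index_policy \<sigma> F0 hist Fc = hd (filter (\<lambda>r. r \<in># Fc) \<sigma>)"

end

theory Submission
  imports Defs
begin


lemma pmf_fubini:
  fixes A :: "'a pmf" and B :: "'b pmf"
  shows "(\<integral>\<^sup>+x. \<integral>\<^sup>+y. f x y \<partial>B \<partial>A) = (\<integral>\<^sup>+y. \<integral>\<^sup>+x. f x y \<partial>A \<partial>B)"
proof -
  have "(\<integral>\<^sup>+x. \<integral>\<^sup>+y. f x y \<partial>B \<partial>A) = (\<integral>\<^sup>+z. case_prod f z \<partial>bind_pmf A (\<lambda>x. bind_pmf B (\<lambda>y. return_pmf (x,y))))"
    by simp
  also have "\<dots> = (\<integral>\<^sup>+z. case_prod f z \<partial>bind_pmf B (\<lambda>y. bind_pmf A (\<lambda>x. return_pmf (x,y))))"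
    by (subst bind_commute_pmf) rule
  also have "\<dots> = (\<integral>\<^sup>+y. \<integral>\<^sup>+x. f x y \<partial>A \<partial>B)" by simp
  finally show ?thesis .
qed

lemma SUP_shift_incseq:
  fixes f :: "nat \<Rightarrow> 'a::complete_lattice"
  assumes "incseq f" shows "(SUP n. f (Suc n)) = (SUP n. f n)"
proof (rule antisym)
  show "(SUP n. f (Suc n)) \<le> (SUP n. f n)" by (rule SUP_least) (rule SUP_upper, simp)
  show "(SUP n. f n) \<le> (SUP n. f (Suc n))"
  proof (rule SUP_least)
    fix n have "f n \<le> f (Suc n)" using assms by (simp add: incseq_def)
    also have "\<dots> \<le> (SUP n. f (Suc n))" by (rule SUP_upper) simp
    finally show "f n \<le> (SUP n. f (Suc n))" .
  qed
qed

definition inL :: "nat list \<Rightarrow> nat multiset \<Rightarrow> bool" where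
  "inL L A \<longleftrightarrow> (\<exists>r\<in>set L. r \<in># A)"

definition topL :: "nat list \<Rightarrow> nat multiset \<Rightarrow> nat" where
  "topL L A = hd (filter (\<lambda>r. r \<in># A) L)"

lemma topL_in:
  assumes "inL L A" shows "topL L A \<in># A" "topL L A \<in> set L"
proof -
  have ne: "filter (\<lambda>r. r \<in># A) L \<noteq> []" using assms by (auto simp: inL_def filter_empty_conv)
  have "topL L A \<in> set (filter (\<lambda>r. r \<in># A) L)" unfolding topL_def using ne by (rule hd_in_set)
  then show "topL L A \<in># A" "topL L A \<in> set L" by auto
qed

lemma inL_append: "inL L A \<Longrightarrow> inL (L @ M) A"
  by (auto simp: inL_def)

lemma topL_append: "inL L A \<Longrightarrow> topL (L @ M) A = topL L A"
  by (auto simp: inL_def topL_def filter_empty_conv)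

lemma inL_frame: "\<not> inL L B \<Longrightarrow> inL L (B + A) \<longleftrightarrow> inL L A"
  by (auto simp: inL_def)

lemma topL_frame: "\<not> inL L B \<Longrightarrow> topL L (B + A) = topL L A"
proof -
  assume "\<not> inL L B"
  then have "filter (\<lambda>r. r \<in># B + A) L = filter (\<lambda>r. r \<in># A) L"
    by (intro filter_cong) (auto simp: inL_def)
  then show ?thesis by (simp add: topL_def)
qed

lemma children_support: "M \<in> set_pmf (children_pmf D h) \<Longrightarrow> set_mset M \<subseteq> {..<h}"
proof (induction h arbitrary: M)
  case 0 then show ?case by simp
next
  case (Suc h)
  then obtain M0 z where "M0 \<in> set_pmf (children_pmf D h)" "M = M0 + replicate_mset z h"
    by auto
  with Suc.IH[of M0] show ?case by (auto split: if_splits)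
qed

lemma outcome_support:
  "ob \<in> set_pmf (outcome_pmf T D pT \<alpha> x) \<Longrightarrow> set_mset (added ob) \<subseteq> {..<x}"
  by (auto simp: outcome_pmf_def added_def dest!: children_support split: if_splits)

lemma nn_integral_outcome:
  assumes "0 \<le> infect_prob T pT \<alpha> x" "infect_prob T pT \<alpha> x \<le> 1"
  shows "(\<integral>\<^sup>+ob. f ob \<partial>outcome_pmf T D pT \<alpha> x) =
     ennreal (infect_prob T pT \<alpha> x) * (\<integral>\<^sup>+M. f (Some M) \<partial>children_pmf D x)
     + ennreal (1 - infect_prob T pT \<alpha> x) * f None"
  using assms by (simp add: outcome_pmf_def mult.commute)


locale ct =
  fixes T :: nat and D :: "nat pmf" and pT \<alpha> \<beta> :: real
  assumes pT_pos: "0 < pT" and pT_le: "pT \<le> 1" and alpha_nn: "0 \<le> \<alpha>" and beta_pos: "0 < \<beta>"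
begin

definition d :: real where "d = exp (- \<beta>)"
definition pinf :: "nat \<Rightarrow> real" where "pinf x = infect_prob T pT \<alpha> x"
definition R :: "nat \<Rightarrow> real" where "R x = pinf x * d ^ x"
abbreviation out :: "nat \<Rightarrow> obs pmf" where "out x \<equiv> outcome_pmf T D pT \<alpha> x"

lemma d_pos: "0 < d" and d_less1: "d < 1"
  using beta_pos by (auto simp: d_def)

lemma pinf_pos: "0 < pinf x"
  using pT_pos by (simp add: pinf_def infect_prob_def)

lemma pinf_le1: "x \<le> T \<Longrightarrow> pinf x \<le> 1"
proof -
  assume "x \<le> T"
  then have "- \<alpha> * (real T - real x) \<le> 0" using alpha_nn by (simp add: mult_nonneg_nonneg)
  then have "exp (- \<alpha> * (real T - real x)) \<le> 1" by simp
  then show ?thesis using pT_le pT_pos unfolding pinf_def infect_prob_def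
    by (meson mult_le_one less_imp_le exp_ge_zero)
qed

lemma R_nn: "0 \<le> R x"
  using pinf_pos[of x] d_pos by (simp add: R_def)

lemma R_le1: "x \<le> T \<Longrightarrow> R x \<le> 1"
  using pinf_le1[of x] pinf_pos d_pos d_less1
  by (simp add: R_def mult_le_one power_le_one)

primrec psi :: "nat list \<Rightarrow> real \<Rightarrow> (nat multiset \<Rightarrow> ennreal) \<Rightarrow> nat \<Rightarrow> nat multiset \<Rightarrow> ennreal" where
  "psi L c f 0 A = 0"
| "psi L c f (Suc n) A = (if inL L A then
      ennreal (c * R (topL L A)) + ennreal d *
        (\<integral>\<^sup>+ob. psi L c f n (A - {#topL L A#} + added ob) \<partial>out (topL L A))
    else f A)"

definition Ps :: "nat list \<Rightarrow> real \<Rightarrow> (nat multiset \<Rightarrow> ennreal) \<Rightarrow> nat multiset \<Rightarrow> ennreal" where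
  "Ps L c f A = (SUP n. psi L c f n A)"

lemma psi_mono_n: "psi L c f n A \<le> psi L c f (Suc n) A"
proof (induction n arbitrary: A)
  case 0 then show ?case by simp
next
  case (Suc n)
  show ?case
    unfolding psi.simps(2)[of L c f "Suc n" A] psi.simps(2)[of L c f n A]
    by (auto intro!: add_left_mono mult_left_mono nn_integral_mono Suc simp del: psi.simps)
qed

lemma psi_incseq: "incseq (\<lambda>n. psi L c f n A)"
  by (rule incseq_SucI) (rule psi_mono_n)

lemma psi_incseq_fun: "incseq (\<lambda>n x. psi L c f n (g x))"
  using psi_incseq by (auto simp: incseq_def le_fun_def)

lemma psi_le_Ps: "psi L c f n A \<le> Ps L c f A"
  unfolding Ps_def by (rule SUP_upper) simp

lemma Ps_alt: "Ps L c f A = (SUP n. psi L c f (Suc n) A)"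
  unfolding Ps_def by (rule SUP_shift_incseq[symmetric]) (rule psi_incseq)

lemma Ps_step:
  assumes "inL L A"
  shows "Ps L c f A = ennreal (c * R (topL L A)) + ennreal d *
        (\<integral>\<^sup>+ob. Ps L c f (A - {#topL L A#} + added ob) \<partial>out (topL L A))"
proof -
  let ?x = "topL L A"
  have "Ps L c f A = (SUP n. ennreal (c * R ?x) + ennreal d *
        (\<integral>\<^sup>+ob. psi L c f n (A - {#?x#} + added ob) \<partial>out ?x))"
    unfolding Ps_alt using assms by simp
  also have "\<dots> = ennreal (c * R ?x) + (SUP n. ennreal d *
        (\<integral>\<^sup>+ob. psi L c f n (A - {#?x#} + added ob) \<partial>out ?x))"
    by (rule ennreal_SUP_add_right[symmetric]) simp
  also have "\<dots> = ennreal (c * R ?x) + ennreal d * (SUP n.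
        (\<integral>\<^sup>+ob. psi L c f n (A - {#?x#} + added ob) \<partial>out ?x))"
    by (simp add: SUP_mult_left_ennreal)
  also have "(SUP n. (\<integral>\<^sup>+ob. psi L c f n (A - {#?x#} + added ob) \<partial>out ?x))
      = (\<integral>\<^sup>+ob. (SUP n. psi L c f n (A - {#?x#} + added ob)) \<partial>out ?x)"
    by (rule nn_integral_monotone_convergence_SUP[symmetric])
       (auto intro: psi_incseq_fun[of L c f "\<lambda>ob. A - {#?x#} + added ob"])
  finally show ?thesis by (simp add: Ps_def)
qed

lemma Ps_stop: "\<not> inL L A \<Longrightarrow> Ps L c f A = f A"
  unfolding Ps_alt by simp

lemma psi_add:
  assumes "0 \<le> c" "0 \<le> c'"
  shows "psi L c f n A + psi L c' g n A = psi L (c + c') (\<lambda>C. f C + g C) n A"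
proof (induction n arbitrary: A)
  case 0 then show ?case by simp
next
  case (Suc n)
  show ?case
  proof (cases "inL L A")
    case True
    let ?x = "topL L A"
    have e1: "ennreal (c * R ?x) + ennreal (c' * R ?x) = ennreal ((c + c') * R ?x)"
      using assms R_nn by (simp add: ennreal_plus[symmetric] distrib_right del: ennreal_plus)
    have e2: "(\<integral>\<^sup>+ob. psi L c f n (A - {#?x#} + added ob) \<partial>out ?x) + (\<integral>\<^sup>+ob. psi L c' g n (A - {#?x#} + added ob) \<partial>out ?x)
       = (\<integral>\<^sup>+ob. psi L (c + c') (\<lambda>C. f C + g C) n (A - {#?x#} + added ob) \<partial>out ?x)"
      by (subst nn_integral_add[symmetric]) (auto simp: Suc)
    show ?thesis using True e1 e2[symmetric]
      by (simp add: distrib_left algebra_simps)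
  qed simp
qed

lemma Ps_add:
  assumes "0 \<le> c" "0 \<le> c'"
  shows "Ps L c f A + Ps L c' g A = Ps L (c + c') (\<lambda>C. f C + g C) A"
  unfolding Ps_def
  by (subst ennreal_SUP_add[symmetric]) (auto intro: psi_incseq simp: psi_add[OF assms])

lemma psi_scale0: "psi L 0 (\<lambda>C. a * f C) n A = a * psi L 0 f n A"
proof (induction n arbitrary: A)
  case 0 then show ?case by simp
next
  case (Suc n) then show ?case
    by (simp add: nn_integral_cmult algebra_simps)
qed

lemma Ps_scale0: "Ps L 0 (\<lambda>C. a * f C) A = a * Ps L 0 f A"
  unfolding Ps_def by (simp add: psi_scale0 SUP_mult_left_ennreal)

lemma psi_pull0:
  fixes \<mu> :: "'b pmf"
  shows "psi L 0 (\<lambda>C. \<integral>\<^sup>+y. \<phi> C y \<partial>\<mu>) n A = (\<integral>\<^sup>+y. psi L 0 (\<lambda>C. \<phi> C y) n A \<partial>\<mu>)"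
proof (induction n arbitrary: A)
  case 0 then show ?case by simp
next
  case (Suc n)
  show ?case
  proof (cases "inL L A")
    case True
    let ?x = "topL L A"
    have "psi L 0 (\<lambda>C. \<integral>\<^sup>+y. \<phi> C y \<partial>\<mu>) (Suc n) A
        = ennreal d * (\<integral>\<^sup>+ob. \<integral>\<^sup>+y. psi L 0 (\<lambda>C. \<phi> C y) n (A - {#?x#} + added ob) \<partial>\<mu> \<partial>out ?x)"
      using True by (simp add: Suc)
    also have "\<dots> = ennreal d * (\<integral>\<^sup>+y. \<integral>\<^sup>+ob. psi L 0 (\<lambda>C. \<phi> C y) n (A - {#?x#} + added ob) \<partial>out ?x \<partial>\<mu>)"
      by (subst pmf_fubini) rule
    also have "\<dots> = (\<integral>\<^sup>+y. psi L 0 (\<lambda>C. \<phi> C y) (Suc n) A \<partial>\<mu>)"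
      using True by (simp add: nn_integral_cmult)
    finally show ?thesis .
  qed simp
qed

lemma Ps_pull0:
  fixes \<mu> :: "'b pmf"
  shows "Ps L 0 (\<lambda>C. \<integral>\<^sup>+y. \<phi> C y \<partial>\<mu>) A = (\<integral>\<^sup>+y. Ps L 0 (\<lambda>C. \<phi> C y) A \<partial>\<mu>)"
  unfolding Ps_def psi_pull0
  by (rule nn_integral_monotone_convergence_SUP[symmetric])
     (auto simp: incseq_def le_fun_def intro: incseq_SucI psi_incseq[unfolded incseq_def, rule_format])

lemma psi_frame:
  assumes "\<not> inL L B"
  shows "psi L c f n (B + A) = psi L c (\<lambda>C. f (B + C)) n A"
proof (induction n arbitrary: A)
  case 0 then show ?case by simp
next
  case (Suc n)
  show ?case
  proof (cases "inL L A")
    case True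
    let ?x = "topL L A"
    have x: "?x \<in># A" using topL_in[OF True] by simp
    have eq: "B + A - {#?x#} + added ob = B + (A - {#?x#} + added ob)" for ob
      using diff_union_single_conv[OF x, of B] by (simp only: add.assoc)
    have 1: "inL L (B + A)" using True assms inL_frame by blast
    have 2: "topL L (B + A) = ?x" using assms topL_frame by blast
    show ?thesis unfolding psi.simps(2)[of L c f n "B + A"] psi.simps(2)[of L c "\<lambda>C. f (B + C)" n A]
      using True 1 2 by (simp only: if_True eq Suc)
  qed (simp add: inL_frame assms)
qed

lemma Ps_frame:
  "\<not> inL L B \<Longrightarrow> Ps L c f (B + A) = Ps L c (\<lambda>C. f (B + C)) A"
  unfolding Ps_def by (simp add: psi_frame)

lemma psi_compose1:
  "psi (L @ M) c f n A \<le> Ps L c (\<lambda>C. Ps (L @ M) c f C) A"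
proof (induction n arbitrary: A)
  case 0 then show ?case by simp
next
  case (Suc n)
  show ?case
  proof (cases "inL L A")
    case True
    then show ?thesis
      by (simp add: Ps_step inL_append topL_append)
         (intro add_left_mono mult_left_mono nn_integral_mono Suc, simp)
  next
    case False
    then have "Ps L c (\<lambda>C. Ps (L @ M) c f C) A = Ps (L @ M) c f A" by (simp add: Ps_stop)
    with psi_le_Ps show ?thesis by metis
  qed
qed

lemma psi_compose2:
  "psi L c (\<lambda>C. Ps (L @ M) c f C) n A \<le> Ps (L @ M) c f A"
proof (induction n arbitrary: A)
  case 0 then show ?case by simp
next
  case (Suc n)
  show ?case
  proof (cases "inL L A")
    case True
    then show ?thesis
      by (simp add: Ps_step[of "L @ M"] inL_append topL_append)
         (intro add_left_mono mult_left_mono nn_integral_mono Suc, simp)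
  qed simp
qed

lemma Ps_compose: "Ps (L @ M) c f A = Ps L c (\<lambda>C. Ps (L @ M) c f C) A"
proof (rule antisym)
  show "Ps (L @ M) c f A \<le> Ps L c (\<lambda>C. Ps (L @ M) c f C) A"
    unfolding Ps_def[of "L @ M" c f A] by (rule SUP_least) (rule psi_compose1)
  show "Ps L c (\<lambda>C. Ps (L @ M) c f C) A \<le> Ps (L @ M) c f A"
    unfolding Ps_def[of L c _ A] by (rule SUP_least) (rule psi_compose2)
qed

end


lemma mset_swap2:
  fixes A B C :: "nat multiset"
  assumes "x \<in># A" "y \<in># A" "x \<noteq> y"
  shows "A - {#y#} + B - {#x#} + C = A - {#x#} + C - {#y#} + B"
proof -
  have "y \<in># A - {#x#}" using assms by (simp add: in_diff_count)
  then obtain A' where "A - {#x#} = add_mset y A'" by (metis insert_DiffM)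
  then have A: "A = add_mset x (add_mset y A')" using assms(1) by (metis insert_DiffM)
  show ?thesis unfolding A using assms(3) by (simp add: add_mset_commute)
qed

context ct begin

lemma psi_any0:
  assumes "x \<in># A" "x \<in> set L"
  shows "psi L 0 f (Suc n) A = ennreal d * (\<integral>\<^sup>+ob. psi L 0 f n (A - {#x#} + added ob) \<partial>out x)"
  using assms
proof (induction n arbitrary: A x)
  case 0
  then have "inL L A" by (auto simp: inL_def)
  then show ?case by simp
next
  case (Suc m)
  have inA: "inL L A" using Suc.prems by (auto simp: inL_def)
  let ?y = "topL L A"
  have y: "?y \<in># A" "?y \<in> set L" using topL_in[OF inA] by auto
  show ?case
  proof (cases "x = ?y")
    case True then show ?thesis using inA by simp
  next
    case False
    have "psi L 0 f (Suc (Suc m)) A = ennreal d * (\<integral>\<^sup>+ob. psi L 0 f (Suc m) (A - {#?y#} + added ob) \<partial>out ?y)"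
      using inA by simp
    also have "\<dots> = ennreal d * (\<integral>\<^sup>+ob. ennreal d * (\<integral>\<^sup>+ob'. psi L 0 f m (A - {#?y#} + added ob - {#x#} + added ob') \<partial>out x) \<partial>out ?y)"
    proof -
      have "x \<in># A - {#?y#} + added ob" for ob using Suc.prems False by (simp add: in_diff_count)
      then have "psi L 0 f (Suc m) (A - {#?y#} + added ob) = ennreal d * (\<integral>\<^sup>+ob'. psi L 0 f m (A - {#?y#} + added ob - {#x#} + added ob') \<partial>out x)" for ob
        using Suc.IH Suc.prems by blast
      then show ?thesis by (simp only:)
    qed
    also have "\<dots> = ennreal d * (\<integral>\<^sup>+ob'. ennreal d * (\<integral>\<^sup>+ob. psi L 0 f m (A - {#x#} + added ob' - {#?y#} + added ob) \<partial>out ?y) \<partial>out x)"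
      by (simp add: nn_integral_cmult mset_swap2[OF Suc.prems(1) y(1) False] pmf_fubini[of "out ?y"])
    also have "\<dots> = ennreal d * (\<integral>\<^sup>+ob'. psi L 0 f (Suc m) (A - {#x#} + added ob') \<partial>out x)"
    proof -
      have "?y \<in># A - {#x#} + added ob'" for ob' using y False by (simp add: in_diff_count)
      then have "psi L 0 f (Suc m) (A - {#x#} + added ob') = ennreal d * (\<integral>\<^sup>+ob. psi L 0 f m (A - {#x#} + added ob' - {#?y#} + added ob) \<partial>out ?y)" for ob'
        using Suc.IH y by blast
      then show ?thesis by (simp only:)
    qed
    finally show ?thesis .
  qed
qed

lemma Ps_any0:
  assumes "x \<in># A" "x \<in> set L"
  shows "Ps L 0 f A = ennreal d * (\<integral>\<^sup>+ob. Ps L 0 f (A - {#x#} + added ob) \<partial>out x)"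
proof -
  have "Ps L 0 f A = (SUP n. ennreal d * (\<integral>\<^sup>+ob. psi L 0 f n (A - {#x#} + added ob) \<partial>out x))"
    unfolding Ps_alt using psi_any0[OF assms] by simp
  also have "\<dots> = ennreal d * (SUP n. (\<integral>\<^sup>+ob. psi L 0 f n (A - {#x#} + added ob) \<partial>out x))"
    by (simp add: SUP_mult_left_ennreal)
  also have "(SUP n. (\<integral>\<^sup>+ob. psi L 0 f n (A - {#x#} + added ob) \<partial>out x))
      = (\<integral>\<^sup>+ob. (SUP n. psi L 0 f n (A - {#x#} + added ob)) \<partial>out x)"
    by (rule nn_integral_monotone_convergence_SUP[symmetric])
       (auto intro: psi_incseq_fun[of L 0 f "\<lambda>ob. A - {#x#} + added ob"])
  finally show ?thesis by (simp add: Ps_def)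
qed

lemma psi_seq1: "psi L 0 (\<lambda>C. Ps L 0 f (C + B)) n A \<le> Ps L 0 f (A + B)"
proof (induction n arbitrary: A)
  case 0 then show ?case by simp
next
  case (Suc n)
  show ?case
  proof (cases "inL L A")
    case True
    let ?x = "topL L A"
    have x: "?x \<in># A" "?x \<in> set L" using topL_in[OF True] by auto
    have eq: "A - {#?x#} + added ob + B = A + B - {#?x#} + added ob" for ob
      using x by (simp add: multiset_eq_iff in_diff_count)
    have "psi L 0 (\<lambda>C. Ps L 0 f (C + B)) (Suc n) A
        \<le> ennreal d * (\<integral>\<^sup>+ob. Ps L 0 f (A - {#?x#} + added ob + B) \<partial>out ?x)"
      using True by (simp del: psi.simps(1)) (intro mult_left_mono nn_integral_mono Suc, simp)
    also have "\<dots> = Ps L 0 f (A + B)"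
    proof -
      have m: "?x \<in># A + B" using x by simp
      show ?thesis unfolding eq using Ps_any0[OF m x(2), of f] by (rule sym)
    qed
    finally show ?thesis .
  qed simp
qed

lemma psi_seq2: "psi L 0 f n (A + B) \<le> Ps L 0 (\<lambda>C. Ps L 0 f (C + B)) A"
proof (induction n arbitrary: A)
  case 0 then show ?case by simp
next
  case (Suc n)
  show ?case
  proof (cases "inL L A")
    case True
    let ?x = "topL L A"
    have x: "?x \<in># A" "?x \<in> set L" using topL_in[OF True] by auto
    have eq: "A + B - {#?x#} + added ob = A - {#?x#} + added ob + B" for ob
      using x by (simp add: multiset_eq_iff in_diff_count)
    have "psi L 0 f (Suc n) (A + B) = ennreal d * (\<integral>\<^sup>+ob. psi L 0 f n (A - {#?x#} + added ob + B) \<partial>out ?x)"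
      using psi_any0[of ?x "A + B" L f n] x by (simp add: eq)
    also have "\<dots> \<le> ennreal d * (\<integral>\<^sup>+ob. Ps L 0 (\<lambda>C. Ps L 0 f (C + B)) (A - {#?x#} + added ob) \<partial>out ?x)"
      by (intro mult_left_mono nn_integral_mono Suc) simp
    also have "\<dots> = Ps L 0 (\<lambda>C. Ps L 0 f (C + B)) A"
      using Ps_step[OF True, of 0] by simp
    finally show ?thesis .
  next
    case False
    then have "Ps L 0 (\<lambda>C. Ps L 0 f (C + B)) A = Ps L 0 f (A + B)" by (simp add: Ps_stop)
    with psi_le_Ps show ?thesis by metis
  qed
qed

lemma Ps_seq: "Ps L 0 f (A + B) = Ps L 0 (\<lambda>C. Ps L 0 f (C + B)) A"
proof (rule antisym)
  show "Ps L 0 f (A + B) \<le> Ps L 0 (\<lambda>C. Ps L 0 f (C + B)) A"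
    unfolding Ps_def[of L 0 f "A + B"] by (rule SUP_least) (rule psi_seq2)
  show "Ps L 0 (\<lambda>C. Ps L 0 f (C + B)) A \<le> Ps L 0 f (A + B)"
    unfolding Ps_def[of L 0 _ A] by (rule SUP_least) (rule psi_seq1)
qed

lemma added_lt:
  assumes "ob \<in> set_pmf (out x)" shows "set_mset (added ob) \<subseteq> {..<x}"
  using outcome_support[OF assms] .

lemma step_bound:
  assumes "set_mset A \<subseteq> {..<m}" "x \<in># A" "ob \<in> set_pmf (out x)"
  shows "set_mset (A - {#x#} + added ob) \<subseteq> {..<m}"
proof -
  have "x < m" using assms by auto
  have "set_mset (A - {#x#} + added ob) \<subseteq> set_mset A \<union> set_mset (added ob)" by (auto dest: in_diffD)
  then show ?thesis using assms added_lt[OF assms(3)] \<open>x < m\<close> by (force simp: subset_iff)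
qed

lemma psi_mono_restr:
  assumes "\<And>C. \<not> inL L C \<Longrightarrow> set_mset C \<subseteq> {..<m} \<Longrightarrow> f C \<le> g C"
  shows "set_mset A \<subseteq> {..<m} \<Longrightarrow> psi L c f n A \<le> psi L c g n A"
proof (induction n arbitrary: A)
  case 0 then show ?case by simp
next
  case (Suc n)
  show ?case
  proof (cases "inL L A")
    case True
    let ?x = "topL L A"
    have x: "?x \<in># A" using topL_in[OF True] by auto
    show ?thesis using True
      by (simp del: psi.simps(1))
         (intro add_left_mono mult_left_mono nn_integral_mono_AE AE_pmfI Suc.IH step_bound[OF Suc.prems x], auto)
  next
    case False then show ?thesis using assms Suc.prems by simp
  qed
qed

lemma Ps_mono_restr:
  assumes "\<And>C. \<not> inL L C \<Longrightarrow> set_mset C \<subseteq> {..<m} \<Longrightarrow> f C \<le> g C" "set_mset A \<subseteq> {..<m}"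
  shows "Ps L c f A \<le> Ps L c g A"
  unfolding Ps_def
proof (rule SUP_mono)
  fix n show "\<exists>m'\<in>UNIV. psi L c f n A \<le> psi L c g m' A"
    using psi_mono_restr[of L m f g A c n] assms by blast
qed

lemma Ps_cong_restr:
  assumes "\<And>C. \<not> inL L C \<Longrightarrow> set_mset C \<subseteq> {..<m} \<Longrightarrow> f C = g C" "set_mset A \<subseteq> {..<m}"
  shows "Ps L c f A = Ps L c g A"
  by (rule antisym; rule Ps_mono_restr[of L m]) (use assms in auto)

lemma Ps_cong:
  assumes "\<And>C. \<not> inL L C \<Longrightarrow> f C = g C"
  shows "Ps L c f A = Ps L c g A"
proof -
  have "\<And>n. psi L c f n A = psi L c g n A"
  proof -
    fix n show "psi L c f n A = psi L c g n A"
      by (induction n arbitrary: A) (auto simp: assms)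
  qed
  then show ?thesis by (simp add: Ps_def)
qed

lemma psi_bound0:
  assumes "\<And>C. f C \<le> ennreal b" "0 \<le> b"
  shows "psi L 0 f n A \<le> ennreal b"
proof (induction n arbitrary: A)
  case 0 then show ?case by simp
next
  case (Suc n)
  show ?case
  proof (cases "inL L A")
    case True
    let ?x = "topL L A"
    have "(\<integral>\<^sup>+ob. psi L 0 f n (A - {#?x#} + added ob) \<partial>out ?x) \<le> (\<integral>\<^sup>+ob. ennreal b \<partial>out ?x)"
      by (intro nn_integral_mono Suc)
    also have "\<dots> = ennreal b" by simp
    finally have "ennreal d * (\<integral>\<^sup>+ob. psi L 0 f n (A - {#?x#} + added ob) \<partial>out ?x) \<le> ennreal d * ennreal b"
      by (rule mult_left_mono) simp
    also have "\<dots> \<le> ennreal b" using d_less1 d_pos assms(2)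
      by (simp add: ennreal_mult[symmetric] del: ennreal_mult) (metis mult_left_le_one_le less_imp_le)
    finally show ?thesis using True by simp
  qed (simp add: assms)
qed

lemma Ps_bound0:
  assumes "\<And>C. f C \<le> ennreal b" "0 \<le> b"
  shows "Ps L 0 f A \<le> ennreal b"
  unfolding Ps_def by (rule SUP_least) (rule psi_bound0[OF assms])

lemma psi_bound1:
  assumes "set L \<subseteq> {..T}"
  shows "psi L 1 (\<lambda>_. 0) n A \<le> ennreal (1 / (1 - d))"
proof (induction n arbitrary: A)
  case 0 then show ?case by simp
next
  case (Suc n)
  show ?case
  proof (cases "inL L A")
    case True
    let ?x = "topL L A"
    have xT: "?x \<le> T" using topL_in(2)[OF True] assms by auto
    have "(\<integral>\<^sup>+ob. psi L 1 (\<lambda>_. 0) n (A - {#?x#} + added ob) \<partial>out ?x) \<le> (\<integral>\<^sup>+ob. ennreal (1 / (1 - d)) \<partial>out ?x)"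
      by (intro nn_integral_mono Suc)
    also have "\<dots> = ennreal (1 / (1 - d))" by simp
    finally have "ennreal d * (\<integral>\<^sup>+ob. psi L 1 (\<lambda>_. 0) n (A - {#?x#} + added ob) \<partial>out ?x) \<le> ennreal d * ennreal (1 / (1 - d))"
      by (rule mult_left_mono) simp
    then have "ennreal (1 * R ?x) + ennreal d * (\<integral>\<^sup>+ob. psi L 1 (\<lambda>_. 0) n (A - {#?x#} + added ob) \<partial>out ?x)
        \<le> ennreal 1 + ennreal d * ennreal (1 / (1 - d))"
      using R_le1[OF xT] by (intro add_mono) auto
    also have "\<dots> = ennreal (1 + d * (1 / (1 - d)))"
    proof -
      have "ennreal d * ennreal (1 / (1 - d)) = ennreal (d * (1 / (1 - d)))"
        using d_pos d_less1 by (intro ennreal_mult[symmetric]) auto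
      moreover have "ennreal 1 + ennreal (d * (1 / (1 - d))) = ennreal (1 + d * (1 / (1 - d)))"
        using d_pos d_less1 by (intro ennreal_plus[symmetric]) auto
      ultimately show ?thesis by simp
    qed
    also have "1 + d * (1 / (1 - d)) = 1 / (1 - d)" using d_less1 by (simp add: field_simps)
    finally show ?thesis using True by simp
  qed simp
qed

lemma Ps_bound1:
  assumes "set L \<subseteq> {..T}"
  shows "Ps L 1 (\<lambda>_. 0) A \<le> ennreal (1 / (1 - d))"
  unfolding Ps_def by (rule SUP_least) (rule psi_bound1[OF assms])

end


context ct begin

lemma d_pow: "d ^ k = exp (- \<beta> * real k)"
  unfolding d_def by (simp add: exp_of_nat_mult[symmetric] mult.commute)

lemma benefit_int:
  assumes "h \<le> T"
  shows "(\<integral>\<^sup>+ob. benefit \<beta> h t ob \<partial>out h) = ennreal (d ^ t) * ennreal (R h)"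
proof -
  have p: "0 \<le> infect_prob T pT \<alpha> h" "infect_prob T pT \<alpha> h \<le> 1"
    using pinf_pos[of h] pinf_le1[OF assms] by (auto simp: pinf_def)
  have "(\<integral>\<^sup>+ob. benefit \<beta> h t ob \<partial>out h) = ennreal (pinf h) * ennreal (exp (- \<beta> * (real h + real t)))"
    by (subst nn_integral_outcome[OF p]) (simp add: benefit_def pinf_def)
  also have "\<dots> = ennreal (d ^ t * R h)"
  proof -
    have "exp (- \<beta> * (real h + real t)) = d ^ h * d ^ t" by (simp add: d_pow distrib_left exp_add[symmetric] algebra_simps)
    then show ?thesis using pinf_pos[of h] d_pos by (simp add: R_def ennreal_mult[symmetric] algebra_simps)
  qed
  finally show ?thesis using d_pos R_nn[of h] by (simp add: ennreal_mult)
qed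

lemma choice_in:
  assumes "Fc \<noteq> {#}" shows "choice \<pi> F0 hist Fc \<in># Fc"
proof -
  have "Min (set_mset Fc) \<in> set_mset Fc" using assms by (intro Min_in) auto
  then show ?thesis by (auto simp: choice_def Let_def)
qed

lemma inL_full:
  assumes "set \<sigma> = {0..T}" "set_mset A \<subseteq> {..T}"
  shows "inL \<sigma> A \<longleftrightarrow> A \<noteq> {#}"
proof
  assume "inL \<sigma> A" then show "A \<noteq> {#}" by (auto simp: inL_def)
next
  assume "A \<noteq> {#}"
  then obtain a where "a \<in># A" by (metis multiset_nonemptyE)
  then show "inL \<sigma> A" using assms unfolding inL_def by (intro bexI[of _ a]) auto
qed

lemma idx_val:
  assumes sig: "set \<sigma> = {0..T}"
  shows "set_mset Fc \<subseteq> {..T} \<Longrightarrow>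
    val_steps T D pT \<alpha> \<beta> (index_policy \<sigma>) n F0 hist Fc = ennreal (d ^ length hist) * psi \<sigma> 1 (\<lambda>_. 0) n Fc"
proof (induction n arbitrary: hist Fc)
  case 0 then show ?case by simp
next
  case (Suc n)
  show ?case
  proof (cases "Fc = {#}")
    case True then show ?thesis using sig by (simp add: inL_def)
  next
    case False
    have inl: "inL \<sigma> Fc" using inL_full[OF sig Suc.prems] False by simp
    let ?h = "topL \<sigma> Fc"
    have h: "?h \<in># Fc" using topL_in[OF inl] by simp
    have hT: "?h \<le> T" using h Suc.prems by auto
    have ch: "choice (index_policy \<sigma>) F0 hist Fc = ?h"
      using h by (simp add: choice_def index_policy_def topL_def)
    have sub: "set_mset (Fc - {#?h#} + added ob) \<subseteq> {..T}" if "ob \<in> set_pmf (out ?h)" for ob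
      using step_bound[of Fc "Suc T" ?h ob] Suc.prems h that by (auto simp: lessThan_Suc_atMost)
    have "val_steps T D pT \<alpha> \<beta> (index_policy \<sigma>) (Suc n) F0 hist Fc
       = (\<integral>\<^sup>+ob. benefit \<beta> ?h (length hist) ob + ennreal (d ^ Suc (length hist)) * psi \<sigma> 1 (\<lambda>_. 0) n (Fc - {#?h#} + added ob) \<partial>out ?h)"
      using False ch
    proof (simp add: Let_def, intro nn_integral_cong_AE AE_pmfI)
      fix ob assume "ob \<in> set_pmf (out ?h)"
      from Suc.IH[OF sub[OF this], of "hist @ [(?h, ob)]"]
      show "benefit \<beta> ?h (length hist) ob + val_steps T D pT \<alpha> \<beta> (index_policy \<sigma>) n F0 (hist @ [(?h, ob)]) (Fc - {#?h#} + added ob) =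
         benefit \<beta> ?h (length hist) ob + ennreal (d * d ^ length hist) * psi \<sigma> 1 (\<lambda>_. 0) n (Fc - {#?h#} + added ob)"
        by simp
    qed
    also have "\<dots> = ennreal (d ^ length hist) * ennreal (R ?h) + ennreal (d ^ Suc (length hist)) * (\<integral>\<^sup>+ob. psi \<sigma> 1 (\<lambda>_. 0) n (Fc - {#?h#} + added ob) \<partial>out ?h)"
      by (simp add: nn_integral_add nn_integral_cmult benefit_int[OF hT])
    also have "\<dots> = ennreal (d ^ length hist) * psi \<sigma> 1 (\<lambda>_. 0) (Suc n) Fc"
      using inl d_pos by (simp add: distrib_left ennreal_mult mult_ac)
    finally show ?thesis .
  qed
qed

lemma idx_total:
  assumes "set \<sigma> = {0..T}" "set_mset F0 \<subseteq> {..T}"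
  shows "total_value T D pT \<alpha> \<beta> (index_policy \<sigma>) F0 = Ps \<sigma> 1 (\<lambda>_. 0) F0"
  unfolding total_value_def Ps_def using idx_val[OF assms(1) assms(2)] by simp

lemma upper_bound:
  assumes bell: "\<And>F h. set_mset F \<subseteq> {..T} \<Longrightarrow> h \<in># F \<Longrightarrow>
      ennreal (R h) + ennreal d * (\<integral>\<^sup>+ob. W (F - {#h#} + added ob) \<partial>out h) \<le> W F"
  shows "set_mset Fc \<subseteq> {..T} \<Longrightarrow>
    val_steps T D pT \<alpha> \<beta> \<pi> n F0 hist Fc \<le> ennreal (d ^ length hist) * W Fc"
proof (induction n arbitrary: hist Fc)
  case 0 then show ?case by simp
next
  case (Suc n)
  show ?case
  proof (cases "Fc = {#}")
    case True then show ?thesis by simp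
  next
    case False
    let ?h = "choice \<pi> F0 hist Fc"
    have h: "?h \<in># Fc" using choice_in[OF False] .
    have hT: "?h \<le> T" using h Suc.prems by auto
    have sub: "set_mset (Fc - {#?h#} + added ob) \<subseteq> {..T}" if "ob \<in> set_pmf (out ?h)" for ob
      using step_bound[of Fc "Suc T" ?h ob] Suc.prems h that by (auto simp: lessThan_Suc_atMost)
    have "val_steps T D pT \<alpha> \<beta> \<pi> (Suc n) F0 hist Fc
       \<le> (\<integral>\<^sup>+ob. benefit \<beta> ?h (length hist) ob + ennreal (d ^ Suc (length hist)) * W (Fc - {#?h#} + added ob) \<partial>out ?h)"
      using False
    proof (simp add: Let_def, intro nn_integral_mono_AE AE_pmfI add_left_mono)
      fix ob assume "ob \<in> set_pmf (out ?h)"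
      from Suc.IH[OF sub[OF this], of "hist @ [(?h, ob)]"]
      show "val_steps T D pT \<alpha> \<beta> \<pi> n F0 (hist @ [(?h, ob)]) (Fc - {#?h#} + added ob) \<le>
         ennreal (d * d ^ length hist) * W (Fc - {#?h#} + added ob)"
        by simp
    qed
    also have "\<dots> = ennreal (d ^ length hist) * (ennreal (R ?h) + ennreal d * (\<integral>\<^sup>+ob. W (Fc - {#?h#} + added ob) \<partial>out ?h))"
      using d_pos by (simp add: nn_integral_add nn_integral_cmult benefit_int[OF hT] distrib_left ennreal_mult mult_ac)
    also have "\<dots> \<le> ennreal (d ^ length hist) * W Fc"
      by (intro mult_left_mono bell Suc.prems h) simp
    finally show ?thesis .
  qed
qed

lemma optimal_from_bellman:
  assumes sig: "set \<sigma> = {0..T}"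
  and bell: "\<And>F h. set_mset F \<subseteq> {..T} \<Longrightarrow> h \<in># F \<Longrightarrow>
      ennreal (R h) + ennreal d * (\<integral>\<^sup>+ob. Ps \<sigma> 1 (\<lambda>_. 0) (F - {#h#} + added ob) \<partial>out h) \<le> Ps \<sigma> 1 (\<lambda>_. 0) F"
  shows "optimal_policy T D pT \<alpha> \<beta> (index_policy \<sigma>)"
  unfolding optimal_policy_def
proof (intro allI impI)
  fix F0 :: "nat multiset" and \<pi>' assume F0: "set_mset F0 \<subseteq> {..T}"
  have "total_value T D pT \<alpha> \<beta> \<pi>' F0 \<le> Ps \<sigma> 1 (\<lambda>_. 0) F0"
    unfolding total_value_def
    using upper_bound[of "Ps \<sigma> 1 (\<lambda>_. 0)", OF bell F0, of \<pi>' _ F0 "[]"]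
    by (intro SUP_least) simp
  then show "total_value T D pT \<alpha> \<beta> \<pi>' F0 \<le> total_value T D pT \<alpha> \<beta> (index_policy \<sigma>) F0"
    using idx_total[OF sig F0] by simp
qed

end


context ct begin

definition M :: "nat list \<Rightarrow> nat \<Rightarrow> (nat multiset \<Rightarrow> ennreal) \<Rightarrow> ennreal" where
  "M L x f = ennreal (R x) + ennreal d * (\<integral>\<^sup>+ob. Ps L 1 f (added ob) \<partial>out x)"

definition K :: "nat list \<Rightarrow> nat \<Rightarrow> (nat multiset \<Rightarrow> ennreal) \<Rightarrow> ennreal" where
  "K L x f = ennreal d * (\<integral>\<^sup>+ob. Ps L 0 f (added ob) \<partial>out x)"

definition rE :: "nat list \<Rightarrow> nat \<Rightarrow> ennreal" where
  "rE L x = ennreal (R x) + ennreal d * (\<integral>\<^sup>+ob. Ps L 1 (\<lambda>_. 0) (added ob) \<partial>out x)"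

definition kE :: "nat list \<Rightarrow> nat \<Rightarrow> ennreal" where
  "kE L x = K L x (\<lambda>_. 1)"

lemma M_decomp: "M L x f = rE L x + K L x f"
proof -
  have "Ps L 1 f A = Ps L 1 (\<lambda>_. 0) A + Ps L 0 f A" for A
    using Ps_add[of 1 0 L "\<lambda>_. 0" A f] by simp
  then show ?thesis
    by (simp add: M_def rE_def K_def nn_integral_add distrib_left add.assoc)
qed

lemma K_affine: "K L x (\<lambda>C. c + g C) = c * kE L x + K L x g"
proof -
  have "Ps L 0 (\<lambda>C. c + g C) A = c * Ps L 0 (\<lambda>_. 1) A + Ps L 0 g A" for A
    using Ps_add[of 0 0 L "\<lambda>_. c" A g] Ps_scale0[of L c "\<lambda>_. 1" A] by simp
  then show ?thesis
    by (simp add: kE_def K_def nn_integral_add nn_integral_cmult distrib_left mult_ac)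
qed

lemma K_K:
  "K L x (\<lambda>C. K L y (\<lambda>C'. G (C + C'))) =
     ennreal d * ennreal d * (\<integral>\<^sup>+ob. \<integral>\<^sup>+ob'. Ps L 0 G (added ob + added ob') \<partial>out y \<partial>out x)"
proof -
  have inner: "Ps L 0 (\<lambda>C. K L y (\<lambda>C'. G (C + C'))) A =
      ennreal d * (\<integral>\<^sup>+ob'. Ps L 0 G (A + added ob') \<partial>out y)" for A
  proof -
    have "Ps L 0 (\<lambda>C. K L y (\<lambda>C'. G (C + C'))) A =
        Ps L 0 (\<lambda>C. ennreal d * (\<integral>\<^sup>+ob'. Ps L 0 G (C + added ob') \<partial>out y)) A"
    proof (rule Ps_cong)
      fix C assume "\<not> inL L C"
      then show "K L y (\<lambda>C'. G (C + C')) = ennreal d * (\<integral>\<^sup>+ob'. Ps L 0 G (C + added ob') \<partial>out y)"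
        by (simp add: K_def Ps_frame[of L C 0 G, symmetric])
    qed
    also have "\<dots> = ennreal d * (\<integral>\<^sup>+ob'. Ps L 0 (\<lambda>C. Ps L 0 G (C + added ob')) A \<partial>out y)"
      by (simp only: Ps_scale0 Ps_pull0)
    also have "\<dots> = ennreal d * (\<integral>\<^sup>+ob'. Ps L 0 G (A + added ob') \<partial>out y)"
      by (simp only: Ps_seq[of L G A "added ob'" for ob', symmetric])
    finally show ?thesis .
  qed
  have "K L x (\<lambda>C. K L y (\<lambda>C'. G (C + C'))) = ennreal d * (\<integral>\<^sup>+ob. Ps L 0 (\<lambda>C. K L y (\<lambda>C'. G (C + C'))) (added ob) \<partial>out x)"
    by (rule K_def)
  also have "\<dots> = ennreal d * (\<integral>\<^sup>+ob. ennreal d * (\<integral>\<^sup>+ob'. Ps L 0 G (added ob + added ob') \<partial>out y) \<partial>out x)"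
    by (simp only: inner)
  finally show ?thesis by (simp add: nn_integral_cmult mult_ac)
qed

lemma K_comm:
  "K L x (\<lambda>C. K L y (\<lambda>C'. G (C + C'))) = K L y (\<lambda>C. K L x (\<lambda>C'. G (C + C')))"
  unfolding K_K by (subst pmf_fubini) (simp add: add.commute)


abbreviation Wv :: "nat list \<Rightarrow> nat multiset \<Rightarrow> ennreal" where
  "Wv \<sigma> \<equiv> Ps \<sigma> 1 (\<lambda>_. 0)"

lemma W_split:
  assumes "\<not> inL (take j \<sigma>) B"
  shows "Wv \<sigma> (B + C) = Ps (take j \<sigma>) 1 (\<lambda>C'. Wv \<sigma> (B + C')) C"
proof -
  have "Wv \<sigma> (B + C) = Ps (take j \<sigma>) 1 (\<lambda>X. Wv \<sigma> X) (B + C)"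
    using Ps_compose[of "take j \<sigma>" "drop j \<sigma>" 1 "\<lambda>_. 0" "B + C"] unfolding append_take_drop_id .
  also have "\<dots> = Ps (take j \<sigma>) 1 (\<lambda>C'. Wv \<sigma> (B + C')) C"
    by (rule Ps_frame[OF assms])
  finally show ?thesis .
qed

lemma inL_sub: "\<not> inL L F \<Longrightarrow> \<not> inL L (F - X)"
  by (auto simp: inL_def dest: in_diffD)

lemma top_nth:
  assumes "k < length \<sigma>" "\<not> inL (take k \<sigma>) F" "\<sigma> ! k \<in># F"
  shows "inL \<sigma> F" "topL \<sigma> F = \<sigma> ! k"
proof -
  have s: "\<sigma> = take k \<sigma> @ \<sigma> ! k # drop (Suc k) \<sigma>" using assms(1) by (rule id_take_nth_drop)
  have e: "filter (\<lambda>r. r \<in># F) (take k \<sigma>) = []" using assms(2) by (auto simp: inL_def filter_empty_conv)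
  show "inL \<sigma> F" using assms(1,3) by (auto simp: inL_def)
  show "topL \<sigma> F = \<sigma> ! k" unfolding topL_def
    by (subst s) (simp add: e assms(3))
qed

lemma S2:
  assumes "k < length \<sigma>" "\<not> inL (take k \<sigma>) F" "\<sigma> ! k \<in># F"
  shows "Wv \<sigma> F = M (take k \<sigma>) (\<sigma> ! k) (\<lambda>C. Wv \<sigma> (F - {#\<sigma> ! k#} + C))"
proof -
  let ?t = "\<sigma> ! k"
  have "Wv \<sigma> F = ennreal (R ?t) + ennreal d * (\<integral>\<^sup>+ob. Wv \<sigma> (F - {#?t#} + added ob) \<partial>out ?t)"
    using Ps_step[OF top_nth(1)[OF assms], of 1 "\<lambda>_. 0"] top_nth(2)[OF assms] by simp
  also have "\<dots> = M (take k \<sigma>) ?t (\<lambda>C. Wv \<sigma> (F - {#?t#} + C))"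
  proof -
    have eq: "Ps (take k \<sigma>) 1 (\<lambda>C. Wv \<sigma> (F - {#?t#} + C)) A = Wv \<sigma> (F - {#?t#} + A)" for A
      using W_split[where j=k and B="F - {#?t#}" and \<sigma>=\<sigma> and C=A] inL_sub[OF assms(2)] by metis
    show ?thesis unfolding M_def eq ..
  qed
  finally show ?thesis .
qed

lemma S3:
  assumes "k < length \<sigma>" "\<not> inL (take (Suc k) \<sigma>) B"
  shows "M (take k \<sigma>) h (\<lambda>C. Wv \<sigma> (B + C)) = M (take (Suc k) \<sigma>) h (\<lambda>C. Wv \<sigma> (B + C))"
proof -
  have tk: "take (Suc k) \<sigma> = take k \<sigma> @ [\<sigma> ! k]" using assms(1) by (rule take_Suc_conv_app_nth)
  have "Ps (take k \<sigma>) 1 (\<lambda>C. Wv \<sigma> (B + C)) A = Ps (take (Suc k) \<sigma>) 1 (\<lambda>C. Wv \<sigma> (B + C)) A" for A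
  proof -
    have "Ps (take k \<sigma>) 1 (\<lambda>C. Wv \<sigma> (B + C)) A
        = Ps (take k \<sigma>) 1 (\<lambda>C. Ps (take (Suc k) \<sigma>) 1 (\<lambda>C'. Wv \<sigma> (B + C')) C) A"
      by (rule Ps_cong) (rule W_split[OF assms(2)])
    also have "\<dots> = Ps (take (Suc k) \<sigma>) 1 (\<lambda>C'. Wv \<sigma> (B + C')) A"
      unfolding tk by (rule Ps_compose[symmetric])
    finally show ?thesis .
  qed
  then show ?thesis by (simp add: M_def)
qed

definition RC :: "nat list \<Rightarrow> nat \<Rightarrow> bool" where
  "RC \<sigma> k \<longleftrightarrow> (\<forall>h. h \<le> T \<longrightarrow> h \<notin> set (take k \<sigma>) \<longrightarrow>
     rE (take k \<sigma>) h + rE (take k \<sigma>) (\<sigma> ! k) * kE (take k \<sigma>) h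
       \<le> rE (take k \<sigma>) (\<sigma> ! k) + rE (take k \<sigma>) h * kE (take k \<sigma>) (\<sigma> ! k))"

lemma M_mono_restr:
  assumes "\<And>C. \<not> inL L C \<Longrightarrow> set_mset C \<subseteq> {..<x} \<Longrightarrow> f C \<le> g C"
  shows "M L x f \<le> M L x g"
  unfolding M_def
  by (intro add_left_mono mult_left_mono nn_integral_mono_AE AE_pmfI Ps_mono_restr[of L x f g] assms added_lt) auto

lemma M_cong_restr:
  assumes "\<And>C. \<not> inL L C \<Longrightarrow> set_mset C \<subseteq> {..<x} \<Longrightarrow> f C = g C"
  shows "M L x f = M L x g"
  by (rule antisym; rule M_mono_restr) (use assms in auto)

lemma M_M:
  "M L x (\<lambda>C. M L y (\<lambda>C'. G (C + C'))) = rE L x + (rE L y * kE L x + K L x (\<lambda>C. K L y (\<lambda>C'. G (C + C'))))"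
proof -
  have "M L x (\<lambda>C. M L y (\<lambda>C'. G (C + C'))) = rE L x + K L x (\<lambda>C. rE L y + K L y (\<lambda>C'. G (C + C')))"
    by (simp add: M_decomp)
  also have "\<dots> = rE L x + (rE L y * kE L x + K L x (\<lambda>C. K L y (\<lambda>C'. G (C + C'))))"
    by (simp add: K_affine)
  finally show ?thesis .
qed

lemma claim:
  assumes sig: "set \<sigma> = {0..T}" and rc: "\<And>j. j < length \<sigma> \<Longrightarrow> RC \<sigma> j"
  shows "k \<le> length \<sigma> \<Longrightarrow> set_mset F \<subseteq> {..T} \<Longrightarrow> \<not> inL (take k \<sigma>) F \<Longrightarrow> h \<in># F \<Longrightarrow>
    M (take k \<sigma>) h (\<lambda>C. Wv \<sigma> (F - {#h#} + C)) \<le> Wv \<sigma> F"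
proof (induction "length \<sigma> - k" arbitrary: k F h)
  case 0
  then have "take k \<sigma> = \<sigma>" by simp
  moreover have "h \<in> set \<sigma>" using 0 sig by auto
  ultimately show ?case using 0 by (auto simp: inL_def)
next
  case (Suc m)
  have k: "k < length \<sigma>" using Suc.hyps by simp
  let ?L = "take k \<sigma>"
  let ?t = "\<sigma> ! k"
  have tT: "?t \<le> T" using k sig nth_mem[OF k] by auto
  have rck: "RC \<sigma> k" using rc k by simp
  have inner: "set_mset F \<subseteq> {..T} \<Longrightarrow> \<not> inL ?L F \<Longrightarrow> h \<in># F \<Longrightarrow>
      M ?L h (\<lambda>C. Wv \<sigma> (F - {#h#} + C)) \<le> Wv \<sigma> F" for F h
  proof (induction "count F ?t" arbitrary: F h rule: less_induct)
    case less
    show ?case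
    proof (cases "?t \<in># F")
      case False
      have nL': "\<not> inL (take (Suc k) \<sigma>) F"
        using less.prems(2) False k by (auto simp: inL_def take_Suc_conv_app_nth)
      have "M ?L h (\<lambda>C. Wv \<sigma> (F - {#h#} + C)) = M (take (Suc k) \<sigma>) h (\<lambda>C. Wv \<sigma> (F - {#h#} + C))"
        by (rule S3[OF k inL_sub[OF nL']])
      also have "\<dots> \<le> Wv \<sigma> F"
        using Suc.hyps(1)[of "Suc k" F h] Suc.hyps(2) k less.prems nL' by simp
      finally show ?thesis .
    next
      case True
      show ?thesis
      proof (cases "h = ?t")
        case True
        then show ?thesis using S2[OF k less.prems(2)] \<open>?t \<in># F\<close> by simp
      next
        case hne: False
        have hT: "h \<le> T" using less.prems by auto
        have hnotL: "h \<notin> set ?L" using less.prems(2,3) by (auto simp: inL_def)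
        have "h \<in># F - {#?t#}" using less.prems(3) hne by (simp add: in_diff_count)
        then obtain F' where F'1: "F - {#?t#} = add_mset h F'" by (metis insert_DiffM)
        have F: "F = add_mset ?t (add_mset h F')" using True F'1 by (metis insert_DiffM)
        define G where "G = (\<lambda>X. Wv \<sigma> (F' + X))"
        have lhs: "M ?L ?t (\<lambda>C. M ?L h (\<lambda>C'. G (C + C'))) \<le> Wv \<sigma> F"
        proof -
          have "M ?L ?t (\<lambda>C. M ?L h (\<lambda>C'. G (C + C'))) \<le> M ?L ?t (\<lambda>C. Wv \<sigma> (F - {#?t#} + C))"
          proof (rule M_mono_restr)
            fix C assume C: "\<not> inL ?L C" "set_mset C \<subseteq> {..<?t}"
            have ct: "count C ?t = 0" using C(2) by (auto simp: count_eq_zero_iff)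
            have p1: "count (F - {#?t#} + C) ?t < count F ?t" using True ct by (simp add: in_diff_count)
            have p2: "set_mset (F - {#?t#} + C) \<subseteq> {..T}" using less.prems(1) C(2) tT by (auto dest: in_diffD)
            have p3: "\<not> inL ?L (F - {#?t#} + C)" using inL_sub[OF less.prems(2)] C(1) by (auto simp: inL_def)
            have p4: "h \<in># F - {#?t#} + C" using F'1 by simp
            have "M ?L h (\<lambda>C'. Wv \<sigma> (F - {#?t#} + C - {#h#} + C')) \<le> Wv \<sigma> (F - {#?t#} + C)"
              using less.hyps[OF p1 p2 p3 p4] .
            moreover have "F - {#?t#} + C - {#h#} + C' = F' + (C + C')" for C'
              using F'1 by (simp add: add.assoc)
            ultimately show "M ?L h (\<lambda>C'. G (C + C')) \<le> Wv \<sigma> (F - {#?t#} + C)"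
              by (simp add: G_def)
          qed
          also have "\<dots> = Wv \<sigma> F" using S2[OF k less.prems(2) True] by simp
          finally show ?thesis .
        qed
        have rhs: "M ?L h (\<lambda>C. Wv \<sigma> (F - {#h#} + C)) = M ?L h (\<lambda>C. M ?L ?t (\<lambda>C'. G (C + C')))"
        proof (rule M_cong_restr)
          fix C assume C: "\<not> inL ?L C" "set_mset C \<subseteq> {..<h}"
          have p2: "\<not> inL ?L (F - {#h#} + C)" using inL_sub[OF less.prems(2)] C(1) by (auto simp: inL_def)
          have p3: "?t \<in># F - {#h#} + C" using F hne by simp
          have "Wv \<sigma> (F - {#h#} + C) = M ?L ?t (\<lambda>C'. Wv \<sigma> (F - {#h#} + C - {#?t#} + C'))"
            by (rule S2[OF k p2 p3])
          moreover have "F - {#h#} + C - {#?t#} + C' = F' + (C + C')" for C'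
            using F hne by (simp add: add.assoc)
          ultimately show "Wv \<sigma> (F - {#h#} + C) = M ?L ?t (\<lambda>C'. G (C + C'))"
            by (simp add: G_def)
        qed
        have ineq: "rE ?L h + rE ?L ?t * kE ?L h \<le> rE ?L ?t + rE ?L h * kE ?L ?t"
          using rck hT hnotL unfolding RC_def by blast
        have "M ?L h (\<lambda>C. Wv \<sigma> (F - {#h#} + C))
            = (rE ?L h + rE ?L ?t * kE ?L h) + K ?L h (\<lambda>C. K ?L ?t (\<lambda>C'. G (C + C')))"
          unfolding rhs M_M by (simp add: add.assoc)
        also have "\<dots> \<le> (rE ?L ?t + rE ?L h * kE ?L ?t) + K ?L ?t (\<lambda>C. K ?L h (\<lambda>C'. G (C + C')))"
          unfolding K_comm[of ?L h] by (rule add_right_mono[OF ineq])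
        also have "\<dots> = M ?L ?t (\<lambda>C. M ?L h (\<lambda>C'. G (C + C')))"
          unfolding M_M by (simp add: add.assoc)
        also have "\<dots> \<le> Wv \<sigma> F" by (rule lhs)
        finally show ?thesis .
      qed
    qed
  qed
  show ?case using inner Suc.prems by simp
qed

lemma bellman_from_RC:
  assumes sig: "set \<sigma> = {0..T}" and rc: "\<And>j. j < length \<sigma> \<Longrightarrow> RC \<sigma> j"
  and F: "set_mset F \<subseteq> {..T}" and h: "h \<in># F"
  shows "ennreal (R h) + ennreal d * (\<integral>\<^sup>+ob. Wv \<sigma> (F - {#h#} + added ob) \<partial>out h) \<le> Wv \<sigma> F"
proof -
  have "M (take 0 \<sigma>) h (\<lambda>C. Wv \<sigma> (F - {#h#} + C)) \<le> Wv \<sigma> F"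
    by (rule claim[OF sig rc]) (use F h in \<open>auto simp: inL_def\<close>)
  moreover have "Ps [] 1 f A = f A" for f A by (rule Ps_stop) (simp add: inL_def)
  ultimately show ?thesis by (simp add: M_def)
qed

end


lemma exp_convex_pt:
  fixes lo hi h s :: real
  assumes "lo \<le> h" "h \<le> hi" "lo < hi"
  shows "exp (s * h) \<le> (1 - (h - lo) / (hi - lo)) * exp (s * lo) + ((h - lo) / (hi - lo)) * exp (s * hi)"
proof -
  let ?th = "(h - lo) / (hi - lo)"
  have th: "0 \<le> ?th" "?th \<le> 1" using assms by (auto simp: field_simps)
  have q: "?th * (hi - lo) = h - lo" using assms by simp
  have "\<forall>t::real. (1 - t) * lo + t * hi = lo + t * (hi - lo)" by (simp add: algebra_simps)
  then have "(1 - ?th) * lo + ?th * hi = lo + ?th * (hi - lo)" by blast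
  then have q2: "(1 - ?th) * lo + ?th * hi = h" using q by simp
  have hh: "s * h = (1 - ?th) *\<^sub>R (s * lo) + ?th *\<^sub>R (s * hi)"
    using arg_cong[OF q2, of "\<lambda>z. s * z"] by (simp add: algebra_simps)
  show ?thesis unfolding hh by (rule convex_onD[OF exp_convex th]) auto
qed

lemma endpoint_phi:
  fixes c \<alpha> \<beta> \<kappa> e lo hi h :: real
  assumes "0 < c" "0 \<le> \<alpha>" "\<alpha> \<le> \<beta>" "lo \<le> h" "h \<le> hi"
  and "\<phi> = (\<lambda>y. c * exp ((\<alpha> - \<beta>) * y) + \<kappa> * exp (\<alpha> * y) - e)"
  and "\<phi> lo \<le> 0" "\<phi> hi \<le> 0"
  shows "\<phi> h \<le> 0"
proof (cases "0 \<le> \<kappa>")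
  case True
  show ?thesis
  proof (cases "lo < hi")
    case True
    let ?th = "(h - lo) / (hi - lo)"
    have th: "0 \<le> ?th" "?th \<le> 1" using assms True by (auto simp: field_simps)
    have e1: "exp ((\<alpha> - \<beta>) * h) \<le> (1 - ?th) * exp ((\<alpha> - \<beta>) * lo) + ?th * exp ((\<alpha> - \<beta>) * hi)"
      by (rule exp_convex_pt) (use assms True in auto)
    have e2: "exp (\<alpha> * h) \<le> (1 - ?th) * exp (\<alpha> * lo) + ?th * exp (\<alpha> * hi)"
      by (rule exp_convex_pt) (use assms True in auto)
    have "\<phi> h \<le> c * ((1 - ?th) * exp ((\<alpha> - \<beta>) * lo) + ?th * exp ((\<alpha> - \<beta>) * hi))
        + \<kappa> * ((1 - ?th) * exp (\<alpha> * lo) + ?th * exp (\<alpha> * hi)) - e"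
      unfolding assms(6) using e1 e2 assms(1) \<open>0 \<le> \<kappa>\<close>
      by (intro diff_right_mono add_mono mult_left_mono) auto
    also have "\<dots> = (1 - ?th) * \<phi> lo + ?th * \<phi> hi"
      unfolding assms(6) by (simp add: algebra_simps)
    also have "\<dots> \<le> 0" using th assms(7,8)
      by (intro add_nonpos_nonpos mult_nonneg_nonpos) auto
    finally show ?thesis .
  next
    case False
    then have "h = lo" using assms by auto
    then show ?thesis using assms by simp
  qed
next
  case False
  have a1: "exp ((\<alpha> - \<beta>) * h) \<le> exp ((\<alpha> - \<beta>) * lo)"
    using mult_left_mono_neg[of lo h "\<alpha> - \<beta>"] assms by simp
  have a2: "exp (\<alpha> * lo) \<le> exp (\<alpha> * h)"
    using assms by (simp add: mult_left_mono)
  have a3: "\<kappa> * exp (\<alpha> * h) \<le> \<kappa> * exp (\<alpha> * lo)"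
    using mult_left_mono_neg[OF a2, of \<kappa>] False by simp
  have a4: "c * exp ((\<alpha> - \<beta>) * h) \<le> c * exp ((\<alpha> - \<beta>) * lo)"
    using a1 assms(1) by simp
  have "\<phi> h \<le> \<phi> lo" unfolding assms(6) using a3 a4 by simp
  then show ?thesis using assms by simp
qed

lemma endpoint_ratio:
  fixes c \<alpha> \<beta> d a b :: real and lo hi h :: nat
  assumes c: "0 < c" and al: "0 \<le> \<alpha>" "\<alpha> \<le> \<beta>" and d: "0 < d" "d < 1" and a: "0 \<le> a" and b: "b \<le> 1"
  and hh: "lo \<le> h" "h \<le> hi"
  and rat: "rat = (\<lambda>y::nat. (c * exp (\<alpha> * y)) * (exp (- \<beta> * y) + d * a) / (1 - d + d * (c * exp (\<alpha> * y)) * (1 - b)))"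
  shows "rat h \<le> max (rat lo) (rat hi)"
proof -
  define lam where "lam = max (rat lo) (rat hi)"
  define den where "den = (\<lambda>y::real. 1 - d + d * (c * exp (\<alpha> * y)) * (1 - b))"
  have den_pos: "0 < den y" for y
  proof -
    have "0 \<le> d * (c * exp (\<alpha> * y)) * (1 - b)" using d c b by (intro mult_nonneg_nonneg) auto
    then show ?thesis using d by (simp add: den_def)
  qed
  define \<phi> where "\<phi> = (\<lambda>y::real. c * exp ((\<alpha> - \<beta>) * y) + (c * d * a - lam * d * c * (1 - b)) * exp (\<alpha> * y) - lam * (1 - d))"
  have phi_eq: "\<phi> y = (c * exp (\<alpha> * y)) * (exp (- \<beta> * y) + d * a) - lam * den y" for y
  proof -
    have ex: "exp (\<alpha> * y) * exp (- \<beta> * y) = exp ((\<alpha> - \<beta>) * y)"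
      by (subst exp_add[symmetric]) (simp add: algebra_simps)
    show ?thesis unfolding \<phi>_def den_def ex[symmetric] by (simp add: algebra_simps)
  qed
  have rat_le: "rat y \<le> lam \<longleftrightarrow> \<phi> (real y) \<le> 0" for y
  proof -
    let ?N = "(c * exp (\<alpha> * real y)) * (exp (- \<beta> * real y) + d * a)"
    have r: "rat y = ?N / den (real y)" unfolding rat den_def by simp
    have "rat y \<le> lam \<longleftrightarrow> ?N \<le> lam * den (real y)"
      unfolding r by (rule pos_divide_le_eq[OF den_pos])
    also have "\<dots> \<longleftrightarrow> \<phi> (real y) \<le> 0" unfolding phi_eq by linarith
    finally show ?thesis .
  qed
  have l1: "\<phi> (real lo) \<le> 0" "\<phi> (real hi) \<le> 0"
    using rat_le[of lo] rat_le[of hi] by (simp_all add: lam_def)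
  have hh': "real lo \<le> real h" "real h \<le> real hi" using hh by simp_all
  have "\<phi> (real h) \<le> 0"
    by (rule endpoint_phi[OF c al hh' \<phi>_def l1])
  then have "rat h \<le> lam" using rat_le by blast
  then show ?thesis by (simp add: lam_def)
qed

lemma children_filter:
  assumes "lo \<le> x"
  shows "map_pmf (filter_mset (\<lambda>y. y < lo)) (children_pmf D x) = children_pmf D lo"
  using assms
proof (induction x)
  case 0 then show ?case by simp
next
  case (Suc x)
  show ?case
  proof (cases "lo = Suc x")
    case True
    show ?thesis unfolding True
    proof (rule map_pmf_idI)
      fix M assume "M \<in> set_pmf (children_pmf D (Suc x))"
      then have "set_mset M \<subseteq> {..<Suc x}" by (rule children_support)
      then have "filter_mset (\<lambda>y. y < Suc x) M = filter_mset (\<lambda>_. True) M" by (intro filter_mset_cong0) auto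
      then show "filter_mset (\<lambda>y. y < Suc x) M = M" by simp
    qed
  next
    case False
    then have lx: "lo \<le> x" using Suc.prems by simp
    have "map_pmf (filter_mset (\<lambda>y. y < lo)) (children_pmf D (Suc x))
        = bind_pmf (children_pmf D x) (\<lambda>M. return_pmf (filter_mset (\<lambda>y. y < lo) M))"
    proof -
      have rep: "filter_mset (\<lambda>y. y < lo) (replicate_mset n x) = {#}" for n
        using lx by (simp add: in_replicate_mset)
      show ?thesis by (simp add: map_bind_pmf pmf.map_comp o_def rep)
    qed
    also have "\<dots> = map_pmf (filter_mset (\<lambda>y. y < lo)) (children_pmf D x)"
      by (simp add: map_pmf_def)
    finally show ?thesis using Suc.IH lx by simp
  qed
qed


context ct begin

definition aS :: "nat list \<Rightarrow> nat \<Rightarrow> real" where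
  "aS L lo = enn2real (\<integral>\<^sup>+N. Ps L 1 (\<lambda>_. 0) N \<partial>children_pmf D lo)"

definition bS :: "nat list \<Rightarrow> nat \<Rightarrow> real" where
  "bS L lo = enn2real (\<integral>\<^sup>+N. Ps L 0 (\<lambda>_. 1) N \<partial>children_pmf D lo)"

definition rat :: "nat list \<Rightarrow> nat \<Rightarrow> nat \<Rightarrow> real" where
  "rat L lo x = pinf x * (d ^ x + d * aS L lo) / (1 - d + d * pinf x * (1 - bS L lo))"

lemma Ps_filter:
  assumes L: "set L = {..<lo} \<union> {hi<..T}" and x: "x \<le> hi"
  and N: "N \<in> set_pmf (children_pmf D x)"
  shows "Ps L c (\<lambda>_. v) N = Ps L c (\<lambda>_. v) (filter_mset (\<lambda>y. y < lo) N)"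
proof -
  let ?B = "filter_mset (\<lambda>y. \<not> y < lo) N"
  have sub: "set_mset N \<subseteq> {..<x}" using children_support[OF N] .
  have nB: "\<not> inL L ?B" using sub L x by (auto simp: inL_def)
  have part: "?B + filter_mset (\<lambda>y. y < lo) N = N"
    using multiset_partition[of N "\<lambda>y. y < lo"] by (simp add: add.commute)
  have "Ps L c (\<lambda>_. v) (?B + filter_mset (\<lambda>y. y < lo) N) = Ps L c (\<lambda>_. v) (filter_mset (\<lambda>y. y < lo) N)"
    by (rule Ps_frame[OF nB])
  then show ?thesis unfolding part .
qed

lemma int_children:
  assumes L: "set L = {..<lo} \<union> {hi<..T}" and x: "lo \<le> x" "x \<le> hi"
  shows "(\<integral>\<^sup>+N. Ps L c (\<lambda>_. v) N \<partial>children_pmf D x) = (\<integral>\<^sup>+N. Ps L c (\<lambda>_. v) N \<partial>children_pmf D lo)"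
proof -
  have "(\<integral>\<^sup>+N. Ps L c (\<lambda>_. v) N \<partial>children_pmf D x)
      = (\<integral>\<^sup>+N. Ps L c (\<lambda>_. v) (filter_mset (\<lambda>y. y < lo) N) \<partial>children_pmf D x)"
    by (intro nn_integral_cong_AE AE_pmfI Ps_filter[OF L x(2)])
  also have "\<dots> = (\<integral>\<^sup>+N. Ps L c (\<lambda>_. v) N \<partial>map_pmf (filter_mset (\<lambda>y. y < lo)) (children_pmf D x))"
    by simp
  also have "\<dots> = (\<integral>\<^sup>+N. Ps L c (\<lambda>_. v) N \<partial>children_pmf D lo)"
    by (simp only: children_filter[OF x(1)])
  finally show ?thesis .
qed

lemma pinf_range: "x \<le> T \<Longrightarrow> 0 \<le> infect_prob T pT \<alpha> x \<and> infect_prob T pT \<alpha> x \<le> 1"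
  using pinf_pos[of x] pinf_le1[of x] by (simp add: pinf_def)

lemma int_a_fin:
  assumes "set L \<subseteq> {..T}"
  shows "(\<integral>\<^sup>+N. Ps L 1 (\<lambda>_. 0) N \<partial>children_pmf D lo) = ennreal (aS L lo)"
proof -
  have "(\<integral>\<^sup>+N. Ps L 1 (\<lambda>_. 0) N \<partial>children_pmf D lo) \<le> (\<integral>\<^sup>+N. ennreal (1 / (1 - d)) \<partial>children_pmf D lo)"
    by (intro nn_integral_mono Ps_bound1[OF assms])
  also have "\<dots> < \<top>" by simp
  finally show ?thesis by (simp add: aS_def)
qed

lemma int_b_fin:
  "(\<integral>\<^sup>+N. Ps L 0 (\<lambda>_. 1) N \<partial>children_pmf D lo) = ennreal (bS L lo)" and bS_le1: "bS L lo \<le> 1"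
proof -
  have "(\<integral>\<^sup>+N. Ps L 0 (\<lambda>_. 1) N \<partial>children_pmf D lo) \<le> (\<integral>\<^sup>+N. ennreal 1 \<partial>children_pmf D lo)"
    by (intro nn_integral_mono Ps_bound0) auto
  also have "\<dots> = 1" by simp
  finally have le: "(\<integral>\<^sup>+N. Ps L 0 (\<lambda>_. 1) N \<partial>children_pmf D lo) \<le> 1" .
  then have "(\<integral>\<^sup>+N. Ps L 0 (\<lambda>_. 1) N \<partial>children_pmf D lo) < \<top>" by (simp add: le_less_trans)
  then show "(\<integral>\<^sup>+N. Ps L 0 (\<lambda>_. 1) N \<partial>children_pmf D lo) = ennreal (bS L lo)" by (simp add: bS_def)
  show "bS L lo \<le> 1" unfolding bS_def using le by (simp add: enn2real_leI)
qed

lemma aS_nn: "0 \<le> aS L lo" and bS_nn: "0 \<le> bS L lo"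
  by (simp_all add: aS_def bS_def)

lemma rE_formula:
  assumes L: "set L = {..<lo} \<union> {hi<..T}" and x: "lo \<le> x" "x \<le> hi" and hT: "hi \<le> T"
  shows "rE L x = ennreal (pinf x * (d ^ x + d * aS L lo))"
proof -
  have xT: "x \<le> T" using x hT by simp
  have LT: "set L \<subseteq> {..T}" using L x hT by auto
  have e0: "Ps L 1 (\<lambda>_. 0) {#} = 0" by (simp add: Ps_stop inL_def)
  have "(\<integral>\<^sup>+ob. Ps L 1 (\<lambda>_. 0) (added ob) \<partial>out x)
      = ennreal (pinf x) * (\<integral>\<^sup>+N. Ps L 1 (\<lambda>_. 0) N \<partial>children_pmf D x)"
    using pinf_range[OF xT] by (subst nn_integral_outcome) (auto simp: added_def e0 pinf_def)
  also have "\<dots> = ennreal (pinf x) * ennreal (aS L lo)"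
    using int_children[OF L x, of 1 0] int_a_fin[OF LT] by simp
  finally have i: "(\<integral>\<^sup>+ob. Ps L 1 (\<lambda>_. 0) (added ob) \<partial>out x) = ennreal (pinf x * aS L lo)"
    using pinf_pos[of x] aS_nn by (simp add: ennreal_mult)
  show ?thesis
    unfolding rE_def i using d_pos pinf_pos[of x] aS_nn[of L lo]
    by (simp add: R_def ennreal_mult[symmetric] ennreal_plus[symmetric] algebra_simps del: ennreal_plus)
qed

lemma kE_formula:
  assumes L: "set L = {..<lo} \<union> {hi<..T}" and x: "lo \<le> x" "x \<le> hi" and hT: "hi \<le> T"
  shows "kE L x = ennreal (d * (1 - pinf x) + d * pinf x * bS L lo)"
proof -
  have xT: "x \<le> T" using x hT by simp
  have e0: "Ps L 0 (\<lambda>_. 1) {#} = 1" by (simp add: Ps_stop inL_def)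
  have p: "0 \<le> pinf x" "pinf x \<le> 1" using pinf_range[OF xT] by (auto simp: pinf_def)
  have "(\<integral>\<^sup>+ob. Ps L 0 (\<lambda>_. 1) (added ob) \<partial>out x)
      = ennreal (pinf x) * (\<integral>\<^sup>+N. Ps L 0 (\<lambda>_. 1) N \<partial>children_pmf D x) + ennreal (1 - pinf x)"
    using pinf_range[OF xT] by (subst nn_integral_outcome) (auto simp: added_def e0 pinf_def)
  also have "\<dots> = ennreal (pinf x) * ennreal (bS L lo) + ennreal (1 - pinf x)"
    using int_children[OF L x, of 0 1] int_b_fin by simp
  also have "\<dots> = ennreal (pinf x * bS L lo + (1 - pinf x))"
    using p bS_nn[of L lo] by (simp add: ennreal_mult ennreal_plus)
  finally have i: "(\<integral>\<^sup>+ob. Ps L 0 (\<lambda>_. 1) (added ob) \<partial>out x) = ennreal (pinf x * bS L lo + (1 - pinf x))" .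
  have nn: "0 \<le> pinf x * bS L lo + (1 - pinf x)" using p bS_nn[of L lo] by simp
  have "ennreal d * ennreal (pinf x * bS L lo + (1 - pinf x)) = ennreal (d * (pinf x * bS L lo + (1 - pinf x)))"
    by (rule ennreal_mult[symmetric]) (use d_pos nn in auto)
  also have "d * (pinf x * bS L lo + (1 - pinf x)) = d * (1 - pinf x) + d * pinf x * bS L lo"
    by (simp add: algebra_simps)
  finally show ?thesis unfolding kE_def K_def i .
qed

lemma stage_RC:
  assumes L: "set L = {..<lo} \<union> {hi<..T}" and lh: "lo \<le> t" "t \<le> hi" and hT: "hi \<le> T"
  and best: "\<And>h. lo \<le> h \<Longrightarrow> h \<le> hi \<Longrightarrow> rat L lo h \<le> rat L lo t"
  and h: "h \<le> T" "h \<notin> set L"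
  shows "rE L h + rE L t * kE L h \<le> rE L t + rE L h * kE L t"
proof -
  have hr: "lo \<le> h" "h \<le> hi" using h L by auto
  define r where "r = (\<lambda>x. pinf x * (d ^ x + d * aS L lo))"
  define k where "k = (\<lambda>x. d * (1 - pinf x) + d * pinf x * bS L lo)"
  have r_nn: "0 \<le> r x" for x using pinf_pos[of x] d_pos aS_nn[of L lo] by (simp add: r_def)
  have k_nn: "x \<le> T \<Longrightarrow> 0 \<le> k x" for x using pinf_pos[of x] pinf_le1[of x] d_pos bS_nn[of L lo]
    by (simp add: k_def)
  have den: "1 - k x = 1 - d + d * pinf x * (1 - bS L lo)" for x by (simp add: k_def algebra_simps)
  have den_pos: "0 < 1 - k x" for x
  proof -
    have "0 \<le> d * pinf x * (1 - bS L lo)" using d_pos pinf_pos[of x] bS_le1[of L lo]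
      by (intro mult_nonneg_nonneg) auto
    then show ?thesis using d_less1 den[of x] by linarith
  qed
  have rat_eq: "rat L lo x = r x / (1 - k x)" for x by (simp add: rat_def r_def den)
  have "r h / (1 - k h) \<le> r t / (1 - k t)" using best[OF hr] by (simp add: rat_eq)
  then have "r h \<le> r t / (1 - k t) * (1 - k h)"
    using pos_divide_le_eq[OF den_pos[of h]] by simp
  then have "r h \<le> (r t * (1 - k h)) / (1 - k t)" by simp
  then have "r h * (1 - k t) \<le> r t * (1 - k h)"
    using pos_le_divide_eq[OF den_pos[of t]] by simp
  then have real_ineq: "r h + r t * k h \<le> r t + r h * k t" by (simp add: algebra_simps)
  have tT: "t \<le> T" using lh hT by simp
  have eqs: "rE L h = ennreal (r h)" "rE L t = ennreal (r t)" "kE L h = ennreal (k h)" "kE L t = ennreal (k t)"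
    using rE_formula[OF L hr hT] rE_formula[OF L lh hT] kE_formula[OF L hr hT] kE_formula[OF L lh hT]
    by (simp_all add: r_def k_def)
  show ?thesis unfolding eqs
    using real_ineq r_nn k_nn[OF h(1)] k_nn[OF tT] r_nn
    by (simp add: ennreal_mult[symmetric] ennreal_plus[symmetric] del: ennreal_plus ennreal_mult)
qed

end


lemma set_step_lo: "set L = {..<lo} \<union> {hi<..T} \<Longrightarrow> lo \<le> (hi::nat) \<Longrightarrow> hi \<le> T \<Longrightarrow> set (L @ [lo]) = {..<Suc lo} \<union> {hi<..T}"
  by (intro set_eqI) auto

lemma set_step_hi: "set L = {..<lo} \<union> {hi<..T} \<Longrightarrow> lo < (hi::nat) \<Longrightarrow> hi \<le> T \<Longrightarrow> set (L @ [hi]) = {..<lo} \<union> {hi - 1<..T}"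
  by (intro set_eqI) auto

lemma set_drop_distinct:
  assumes "distinct xs" shows "set (drop j xs) = set xs - set (take j xs)"
proof -
  have u: "set xs = set (take j xs) \<union> set (drop j xs)" by (metis append_take_drop_id set_append)
  have "set (take j xs) \<inter> set (drop j xs) = {}" using assms by (metis append_take_drop_id distinct_append)
  then show ?thesis using u by blast
qed

context ct begin

lemma pinf_exp: "pinf x = pT * exp (- \<alpha> * real T) * exp (\<alpha> * real x)"
proof -
  have e: "- \<alpha> * (real T - real x) = - \<alpha> * real T + \<alpha> * real x" by (simp add: algebra_simps)
  have "pinf x = pT * exp (- \<alpha> * real T + \<alpha> * real x)" unfolding pinf_def infect_prob_def e ..
  also have "\<dots> = pT * exp (- \<alpha> * real T) * exp (\<alpha> * real x)" by (simp only: exp_add mult.assoc)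
  finally show ?thesis .
qed

lemma R_exp: "R x = pT * exp (- \<alpha> * real T) * exp ((\<alpha> - \<beta>) * real x)"
proof -
  have "exp (\<alpha> * real x) * exp (- \<beta> * real x) = exp ((\<alpha> - \<beta>) * real x)"
    by (subst exp_add[symmetric]) (simp add: algebra_simps)
  then show ?thesis unfolding R_def pinf_exp d_pow by (simp add: mult.assoc)
qed

lemma R_mono: "\<beta> \<le> \<alpha> \<Longrightarrow> x \<le> y \<Longrightarrow> R x \<le> R y"
  unfolding R_exp using pT_pos by (simp add: mult_left_mono)

lemma R_strict: "\<beta> < \<alpha> \<Longrightarrow> x < y \<Longrightarrow> R x < R y"
  unfolding R_exp using pT_pos by simp

lemma rat_lo0: "rat L 0 x = R x / (1 - d)"
proof -
  have a: "aS L 0 = 0" by (simp add: aS_def Ps_stop inL_def)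
  have b: "bS L 0 = 1" by (simp add: bS_def Ps_stop inL_def)
  show ?thesis by (simp add: rat_def a b R_def)
qed

lemma EP:
  assumes "\<alpha> \<le> \<beta> \<or> lo = 0" "lo \<le> h" "h \<le> hi"
  shows "rat L lo h \<le> max (rat L lo lo) (rat L lo hi)"
proof (cases "\<alpha> \<le> \<beta>")
  case True
  have eq: "rat L lo = (\<lambda>y::nat. ((pT * exp (- \<alpha> * real T)) * exp (\<alpha> * y)) * (exp (- \<beta> * y) + d * aS L lo) /
      (1 - d + d * ((pT * exp (- \<alpha> * real T)) * exp (\<alpha> * y)) * (1 - bS L lo)))"
    by (rule ext) (simp add: rat_def pinf_exp d_pow)
  show ?thesis
    by (rule endpoint_ratio[OF _ alpha_nn True d_pos d_less1 aS_nn bS_le1 assms(2,3) eq]) (use pT_pos in simp)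
next
  case False
  then have lo: "lo = 0" using assms by simp
  have "R h \<le> R hi" using False assms by (intro R_mono) auto
  then have "rat L lo h \<le> rat L lo hi" unfolding lo rat_lo0 using d_less1 by (simp add: divide_right_mono)
  then show ?thesis by simp
qed

primrec build :: "nat \<Rightarrow> nat list \<Rightarrow> nat \<Rightarrow> nat \<Rightarrow> nat list" where
  "build 0 L lo hi = L"
| "build (Suc n) L lo hi = (if rat L lo hi \<le> rat L lo lo then build n (L @ [lo]) (Suc lo) hi
     else build n (L @ [hi]) lo (hi - 1))"

lemma build_inv:
  assumes "set L = {..<lo} \<union> {hi<..T}" "distinct L" "lo + n = Suc hi" "hi \<le> T"
    "\<beta> < \<alpha> \<longrightarrow> lo = 0 \<or> n = 0"
  shows "take (length L) (build n L lo hi) = L \<and> set (build n L lo hi) = {0..T} \<and> distinct (build n L lo hi) \<and>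
    (\<forall>j. length L \<le> j \<longrightarrow> j < length (build n L lo hi) \<longrightarrow> RC (build n L lo hi) j \<and>
       (build n L lo hi ! j = Max (set (drop j (build n L lo hi))) \<or> build n L lo hi ! j = Min (set (drop j (build n L lo hi)))))"
  using assms
proof (induction n arbitrary: L lo hi)
  case 0
  have lo: "lo = Suc hi" using 0 by simp
  have "{..<Suc hi} \<union> {hi<..T} = {0..T}" using 0(4) by (intro set_eqI) auto
  then have "set L = {0..T}" using 0(1) lo by simp
  then show ?case using 0 by simp
next
  case (Suc n)
  have lohi: "lo \<le> hi" using Suc.prems(3) by simp
  define c where "c = (rat L lo hi \<le> rat L lo lo)"
  define t where "t = (if c then lo else hi)"
  define lo' where "lo' = (if c then Suc lo else lo)"
  define hi' where "hi' = (if c then hi else hi - 1)"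
  have bdef: "build (Suc n) L lo hi = build n (L @ [t]) lo' hi'"
    by (simp add: c_def t_def lo'_def hi'_def)
  have lo_hi_ne: "\<not> c \<Longrightarrow> lo < hi" using lohi by (cases "lo = hi") (auto simp: c_def)
  have tr: "lo \<le> t" "t \<le> hi" using lohi by (auto simp: t_def)
  have tnot: "t \<notin> set L" using Suc.prems(1) tr by auto
  have p1: "set (L @ [t]) = {..<lo'} \<union> {hi'<..T}"
  proof (cases c)
    case True
    then have "t = lo" "lo' = Suc lo" "hi' = hi" by (simp_all add: t_def lo'_def hi'_def)
    then show ?thesis using set_step_lo[OF Suc.prems(1) lohi Suc.prems(4)] by simp
  next
    case False
    then have "t = hi" "lo' = lo" "hi' = hi - 1" by (simp_all add: t_def lo'_def hi'_def)
    then show ?thesis using set_step_hi[OF Suc.prems(1) lo_hi_ne[OF False] Suc.prems(4)] by simp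
  qed
  have p2: "distinct (L @ [t])" using Suc.prems(2) tnot by simp
  have p3: "lo' + n = Suc hi'" using Suc.prems(3) lo_hi_ne by (cases c) (auto simp: lo'_def hi'_def)
  have p4: "hi' \<le> T" using Suc.prems(4) by (auto simp: hi'_def)
  have lo0: "\<beta> < \<alpha> \<Longrightarrow> lo = 0" using Suc.prems(5) by simp
  have p5: "\<beta> < \<alpha> \<longrightarrow> lo' = 0 \<or> n = 0"
  proof
    assume ba: "\<beta> < \<alpha>"
    show "lo' = 0 \<or> n = 0"
    proof (cases c)
      case False then show ?thesis using lo0[OF ba] by (simp add: lo'_def)
    next
      case True
      have "hi = 0"
      proof (rule ccontr)
        assume "hi \<noteq> 0"
        then have "R 0 < R hi" using R_strict[OF ba] by simp
        then have "rat L 0 0 < rat L 0 hi" unfolding rat_lo0 using d_less1 by (simp add: divide_strict_right_mono)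
        then show False using True lo0[OF ba] by (simp add: c_def)
      qed
      then show ?thesis using Suc.prems(3) by simp
    qed
  qed
  note IH = Suc.IH[OF p1 p2 p3 p4 p5]
  let ?s = "build n (L @ [t]) lo' hi'"
  have tk: "take (Suc (length L)) ?s = L @ [t]" using IH by simp
  have tk0: "take (length L) ?s = L"
    using arg_cong[OF tk, of "take (length L)"] by (simp add: min_def)
  have lenL: "length L < length ?s"
  proof -
    have "length (take (Suc (length L)) ?s) = Suc (length L)" using tk by simp
    then show ?thesis by simp
  qed
  have nth: "?s ! length L = t"
    using arg_cong[OF tk, of "\<lambda>xs. xs ! length L"] lenL by simp
  have sets: "set ?s = {0..T}" and dist: "distinct ?s" using IH by auto
  have drop_set: "set (drop (length L) ?s) = {lo..hi}"
    using set_drop_distinct[OF dist, of "length L"] tk0 sets Suc.prems(1) Suc.prems(4) by auto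
  have best: "rat L lo h \<le> rat L lo t" if "lo \<le> h" "h \<le> hi" for h
  proof -
    have ep: "\<alpha> \<le> \<beta> \<or> lo = 0" using lo0 by force
    have "rat L lo h \<le> max (rat L lo lo) (rat L lo hi)" by (rule EP[OF ep that])
    also have "\<dots> = rat L lo t" by (auto simp: t_def c_def max_def)
    finally show ?thesis .
  qed
  have at_L: "RC ?s (length L) \<and> (?s ! length L = Max (set (drop (length L) ?s)) \<or> ?s ! length L = Min (set (drop (length L) ?s)))"
  proof
    show "RC ?s (length L)" unfolding RC_def tk0 nth
      using stage_RC[OF Suc.prems(1) tr Suc.prems(4) best] by blast
    show "?s ! length L = Max (set (drop (length L) ?s)) \<or> ?s ! length L = Min (set (drop (length L) ?s))"
    proof -
      have mx: "Max {lo..hi} = hi" using lohi by (intro Max_eqI) auto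
      have mn: "Min {lo..hi} = lo" using lohi by (intro Min_eqI) auto
      show ?thesis unfolding drop_set nth mx mn by (simp add: t_def)
    qed
  qed
  have rest: "\<forall>j. length L \<le> j \<longrightarrow> j < length ?s \<longrightarrow> RC ?s j \<and> (?s ! j = Max (set (drop j ?s)) \<or> ?s ! j = Min (set (drop j ?s)))"
  proof (intro allI impI)
    fix j assume j: "length L \<le> j" "j < length ?s"
    show "RC ?s j \<and> (?s ! j = Max (set (drop j ?s)) \<or> ?s ! j = Min (set (drop j ?s)))"
    proof (cases "j = length L")
      case True then show ?thesis using at_L by simp
    next
      case False then show ?thesis using IH j by simp
    qed
  qed
  show ?case unfolding bdef using tk0 sets dist rest by blast
qed

end

theorem theorem6p2:
  fixes T :: nat and D :: "nat pmf" and pT \<alpha> \<beta> :: real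
  assumes "0 < pT" and "pT \<le> 1" and "0 \<le> \<alpha>" and "0 < \<beta>"
  shows "\<exists>\<sigma>. priority_ordering T \<sigma> \<and> interleaved T \<sigma> \<and>
           optimal_policy T D pT \<alpha> \<beta> (index_policy \<sigma>)"
proof -
  interpret ct T D pT \<alpha> \<beta> by unfold_locales (use assms in auto)
  define \<sigma> where "\<sigma> = build (Suc T) [] 0 T"
  have inv: "set \<sigma> = {0..T} \<and> distinct \<sigma> \<and>
    (\<forall>j. j < length \<sigma> \<longrightarrow> RC \<sigma> j \<and> (\<sigma> ! j = Max (set (drop j \<sigma>)) \<or> \<sigma> ! j = Min (set (drop j \<sigma>))))"
  proof -
    have e: "set [] = {..<0} \<union> {T<..(T::nat)}" by auto
    show ?thesis unfolding \<sigma>_def using build_inv[OF e, of "Suc T"] by (simp del: build.simps)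
  qed
  have sig: "set \<sigma> = {0..T}" and dist: "distinct \<sigma>" using inv by auto
  have len: "length \<sigma> = Suc T" using distinct_card[OF dist] sig by simp
  have po: "priority_ordering T \<sigma>" using sig dist by (simp add: priority_ordering_def)
  have il: "interleaved T \<sigma>" unfolding interleaved_def using inv len by auto
  have rc: "\<And>j. j < length \<sigma> \<Longrightarrow> RC \<sigma> j" using inv by auto
  have opt: "optimal_policy T D pT \<alpha> \<beta> (index_policy \<sigma>)"
    by (rule optimal_from_bellman[OF sig]) (rule bellman_from_RC[OF sig rc])
  show ?thesis using po il opt by blast
qed


end
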